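(* (a) Let $\{\mu_n\}$ be probability density functions on $\mathbb R^d$ which are uniformly bounded and uniformly equicontinuous, and suppose the corresponding probability measures converge weakly to a probability measure $\mu$. Then $\mu_n\to\mu$ in total variation. (b) Let $Q_n,Q\in\mathcal Q_c$ and let $P\in\mathcal P(\mathbb R^d)$ admit a density. If $PQ_n\to PQ$ weakly, then $PQ_n\to PQ$ in total variation. If moreover the density of $P$ is strictly positive, then $P'Q_n\to P'Q$ in total variation for every $P'\in\mathcal P(\mathbb R^d)$ admitting a density. (c) Let $Q_n,Q\in\mathcal Q_c$ with $PQ_n\to PQ$ weakly for some $P$ admitting a strictly positive density. Suppose $P'_n\to P'$ in total variation, where $P'$ admits a density. Then $P'_nQ_n\to P'Q$ in total variation.
   Context: Let $\mathcal M=\{1,\dots,M\}$. An $M$-cell quantizer is a Borel map $Q:\mathbb R^d\to\mathcal M$ with cells $Q^{-1}(i)$; $\mathcal Q_c$ is the set of quantizers all of whose cells are convex (the empty set is considered convex). For $P\in\mathcal P(\mathbb R^d)$ and a quantizer $Q$, $PQ$ denotes the probability measure on $\mathbb R^d\times\mathcal M$ given by $PQ(A\times\{i\})=P(A\cap Q^{-1}(i))$. The total variation distance is $d_{TV}(\mu,\nu)=2\sup_B|\mu(B)-\nu(B)|$. *)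

theory Defs
  imports "HOL-Probability.Probability"
begin

definition prob_borel :: "'a::topological_space measure \<Rightarrow> bool" where
  "prob_borel P \<longleftrightarrow> prob_space P \<and> sets P = sets borel"

definition weak_conv_gen :: "(nat \<Rightarrow> 'a::topological_space measure) \<Rightarrow> 'a measure \<Rightarrow> bool" where
  "weak_conv_gen \<mu>s \<mu> \<longleftrightarrow>
     (\<forall>f :: 'a \<Rightarrow> real. continuous_on UNIV f \<and> bounded (range f) \<longrightarrow>
        (\<lambda>n. integral\<^sup>L (\<mu>s n) f) \<longlonglongrightarrow> integral\<^sup>L \<mu> f)"

definition tv_dist :: "'a measure \<Rightarrow> 'a measure \<Rightarrow> real" where
  "tv_dist \<mu> \<nu> = 2 * (SUP B\<in>sets \<mu>. \<bar>measure \<mu> B - measure \<nu> B\<bar>)"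

definition has_density :: "'a::euclidean_space measure \<Rightarrow> bool" where
  "has_density P \<longleftrightarrow> (\<exists>f :: 'a \<Rightarrow> real. f \<in> borel_measurable borel \<and> (\<forall>x. 0 \<le> f x) \<and>
        P = density lborel (\<lambda>x. ennreal (f x)))"

definition has_pos_density :: "'a::euclidean_space measure \<Rightarrow> bool" where
  "has_pos_density P \<longleftrightarrow> (\<exists>f :: 'a \<Rightarrow> real. f \<in> borel_measurable borel \<and> (\<forall>x. 0 < f x) \<and>
        P = density lborel (\<lambda>x. ennreal (f x)))"

definition quantizer :: "nat \<Rightarrow> ('a::euclidean_space \<Rightarrow> nat) \<Rightarrow> bool" where
  "quantizer M Q \<longleftrightarrow> Q \<in> borel_measurable borel \<and> (\<forall>x. Q x \<in> {1..M})"

definition convex_quantizers :: "nat \<Rightarrow> ('a::euclidean_space \<Rightarrow> nat) set" where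
  "convex_quantizers M = {Q. quantizer M Q \<and> (\<forall>i\<in>{1..M}. convex (Q -` {i}))}"

text \<open>PQ(A x {i}) = P(A \<inter> Q^-1(i)): the image of P under x \<mapsto> (x, Q x).\<close>
definition joint :: "'a::euclidean_space measure \<Rightarrow> ('a \<Rightarrow> nat) \<Rightarrow> ('a \<times> nat) measure" where
  "joint P Q = distr P borel (\<lambda>x. (x, Q x))"

end

theory Submission
  imports Defs
begin

lemma sp_univ: "sets P = sets borel \<Longrightarrow> space P = (UNIV :: 'a::topological_space set)"
  by (metis sets_eq_imp_space_eq space_borel)

lemma tv_bdd:
  assumes "prob_space P1" "prob_space P2"
  shows "bdd_above ((\<lambda>B. \<bar>measure P1 B - measure P2 B\<bar>) ` sets P1)"
proof (rule bdd_aboveI2)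
  fix B
  have "measure P1 B \<le> 1" "measure P2 B \<le> 1"
    using prob_space.prob_le_1[OF assms(1)] prob_space.prob_le_1[OF assms(2)] by auto
  moreover have "0 \<le> measure P1 B" "0 \<le> measure P2 B" by auto
  ultimately show "\<bar>measure P1 B - measure P2 B\<bar> \<le> 1" unfolding abs_le_iff by linarith
qed

lemma tv_ge:
  assumes "prob_space P1" "prob_space P2" "B \<in> sets P1"
  shows "\<bar>measure P1 B - measure P2 B\<bar> \<le> tv_dist P1 P2 / 2"
  unfolding tv_dist_def using cSUP_upper[OF assms(3) tv_bdd[OF assms(1,2)]] by simp

lemma tv_nonneg:
  assumes "prob_space P1" "prob_space P2"
  shows "0 \<le> tv_dist P1 P2"
  using tv_ge[OF assms, of "{}"] by simp

lemma tv_le: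
  assumes "\<And>B. B \<in> sets P1 \<Longrightarrow> \<bar>measure P1 B - measure P2 B\<bar> \<le> c"
  shows "tv_dist P1 P2 \<le> 2 * c"
proof -
  have "(SUP B\<in>sets P1. \<bar>measure P1 B - measure P2 B\<bar>) \<le> c"
    by (rule cSUP_least) (use assms sets.empty_sets in auto)
  then show ?thesis unfolding tv_dist_def by simp
qed

lemma quantizer_meas:
  assumes "quantizer M Q" "sets P = sets borel"
  shows "(\<lambda>x. (x, Q x)) \<in> P \<rightarrow>\<^sub>M (borel :: ('a::euclidean_space \<times> nat) measure)"
proof -
  have Q: "Q \<in> borel \<rightarrow>\<^sub>M borel" using assms(1) unfolding quantizer_def by auto
  have "(\<lambda>x. (x, Q x)) \<in> borel \<rightarrow>\<^sub>M (borel \<Otimes>\<^sub>M (borel :: nat measure))"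
    by (rule measurable_Pair) (use Q in auto)
  then have "(\<lambda>x. (x, Q x)) \<in> borel \<rightarrow>\<^sub>M (borel :: ('a \<times> nat) measure)"
    by (simp add: borel_prod)
  moreover have "P \<rightarrow>\<^sub>M N = borel \<rightarrow>\<^sub>M N" for N :: "('a \<times> nat) measure"
    by (rule measurable_cong_sets[OF assms(2) refl])
  ultimately show ?thesis by simp
qed

lemma joint_tv:
  fixes P1 P2 :: "'a::euclidean_space measure"
  assumes "prob_borel P1" "prob_borel P2" "quantizer M Q1" "quantizer M Q2"
  shows "tv_dist (joint P1 Q1) (joint P2 Q2) \<le> tv_dist P1 P2 + 2 * measure P2 {x. Q1 x \<noteq> Q2 x}"
proof -
  have p1: "prob_space P1" "sets P1 = sets borel" and p2: "prob_space P2" "sets P2 = sets borel"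
    using assms(1,2) unfolding prob_borel_def by auto
  have sp1: "space P1 = UNIV" by (rule sp_univ[OF p1(2)])
  have sp2: "space P2 = UNIV" by (rule sp_univ[OF p2(2)])
  have m1: "(\<lambda>x. (x, Q1 x)) \<in> P1 \<rightarrow>\<^sub>M borel" by (rule quantizer_meas[OF assms(3) p1(2)])
  have m2: "(\<lambda>x. (x, Q2 x)) \<in> P2 \<rightarrow>\<^sub>M borel" by (rule quantizer_meas[OF assms(4) p2(2)])
  have m2': "(\<lambda>x. (x, Q2 x)) \<in> P1 \<rightarrow>\<^sub>M borel"
    using m2 measurable_cong_sets[OF p2(2)[symmetric] refl] p1(2) measurable_cong_sets by metis
  have m1': "(\<lambda>x. (x, Q1 x)) \<in> P2 \<rightarrow>\<^sub>M borel"
    using m1 measurable_cong_sets[OF p1(2)[symmetric] refl] p2(2) measurable_cong_sets by metis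
  have q1: "Q1 \<in> borel_measurable P2" "Q2 \<in> borel_measurable P2"
    using assms(3,4) measurable_cong_sets[OF p2(2) refl] unfolding quantizer_def by auto
  have D0: "{x \<in> space P2. Q1 x \<noteq> Q2 x} \<in> sets P2"
    using q1 by measurable
  then have D: "{x. Q1 x \<noteq> Q2 x} \<in> sets P2" using sp2 by simp
  show ?thesis
  proof -
    have "\<bar>measure (joint P1 Q1) B - measure (joint P2 Q2) B\<bar> \<le> tv_dist P1 P2 / 2 + measure P2 {x. Q1 x \<noteq> Q2 x}"
      if B: "B \<in> sets (joint P1 Q1)" for B
    proof -
      have Bb: "B \<in> sets borel" using B unfolding joint_def by simp
      define S1 where "S1 = (\<lambda>x. (x, Q1 x)) -` B"
      define S2 where "S2 = (\<lambda>x. (x, Q2 x)) -` B"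
      have e1: "measure (joint P1 Q1) B = measure P1 S1"
        unfolding joint_def S1_def using measure_distr[OF m1 Bb] sp1 by simp
      have e2: "measure (joint P2 Q2) B = measure P2 S2"
        unfolding joint_def S2_def using measure_distr[OF m2 Bb] sp2 by simp
      have S1s: "S1 \<in> sets P1" "S1 \<in> sets P2"
        using measurable_sets[OF m1 Bb] measurable_sets[OF m1' Bb] sp1 sp2 unfolding S1_def by auto
      have S2s: "S2 \<in> sets P2"
        using measurable_sets[OF m2 Bb] sp2 unfolding S2_def by auto
      have a: "\<bar>measure P1 S1 - measure P2 S1\<bar> \<le> tv_dist P1 P2 / 2"
        by (rule tv_ge[OF p1(1) p2(1) S1s(1)])
      interpret p2: prob_space P2 by (rule p2(1))
      have "S1 - S2 \<subseteq> {x. Q1 x \<noteq> Q2 x}" "S2 - S1 \<subseteq> {x. Q1 x \<noteq> Q2 x}"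
        unfolding S1_def S2_def by auto
      then have "measure P2 (S1 - S2) \<le> measure P2 {x. Q1 x \<noteq> Q2 x}"
           "measure P2 (S2 - S1) \<le> measure P2 {x. Q1 x \<noteq> Q2 x}"
        using D by (auto intro!: p2.finite_measure_mono)
      moreover have "measure P2 S1 \<le> measure P2 S2 + measure P2 (S1 - S2)"
        using p2.finite_measure_Diff'[OF S1s(2) S2s] p2.finite_measure_mono[of "S1 \<inter> S2" S2] S2s
        by auto
      moreover have "measure P2 S2 \<le> measure P2 S1 + measure P2 (S2 - S1)"
        using p2.finite_measure_Diff'[OF S2s S1s(2)] p2.finite_measure_mono[of "S2 \<inter> S1" S1] S1s
        by auto
      ultimately have b: "\<bar>measure P2 S1 - measure P2 S2\<bar> \<le> measure P2 {x. Q1 x \<noteq> Q2 x}"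
        by auto
      show ?thesis unfolding e1 e2 using a b by linarith
    qed
    then have "tv_dist (joint P1 Q1) (joint P2 Q2) \<le> 2 * (tv_dist P1 P2 / 2 + measure P2 {x. Q1 x \<noteq> Q2 x})"
      by (rule tv_le)
    then show ?thesis by simp
  qed
qed


lemma reg_approx:
  fixes P :: "'a::euclidean_space measure"
  assumes "prob_borel P" "C \<in> sets borel" "\<eta> > 0"
  shows "\<exists>F U. closed F \<and> open U \<and> F \<subseteq> C \<and> C \<subseteq> U \<and> measure P (U - F) < \<eta>"
proof -
  have p: "prob_space P" "sets P = sets borel" using assms(1) unfolding prob_borel_def by auto
  interpret prob_space P by (rule p(1))
  have fin: "emeasure P (space P) \<noteq> \<infinity>" by simp
  have CP: "C \<in> sets P" using assms(2) p(2) by simp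
  obtain K where K: "K \<subseteq> C" "compact K" "measure P C - \<eta>/2 < measure P K"
  proof (cases "measure P C - \<eta>/2 < 0")
    case True
    then show ?thesis using that[of "{}"] by auto
  next
    case False
    have "ennreal (measure P C - \<eta>/2) < ennreal (measure P C)"
      using False assms(3) by (subst ennreal_less_iff) auto
    also have "\<dots> = emeasure P C" by (simp add: emeasure_eq_measure)
    also have "\<dots> = (SUP K \<in> {K. K \<subseteq> C \<and> compact K}. emeasure P K)"
      by (rule inner_regular[OF p(2) fin assms(2)])
    finally obtain K where "K \<subseteq> C" "compact K" "ennreal (measure P C - \<eta>/2) < emeasure P K"
      by (auto simp: less_SUP_iff)
    moreover have "measure P C - \<eta>/2 < measure P K"
      using calculation(3) False by (auto simp: emeasure_eq_measure ennreal_less_iff)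
    ultimately show ?thesis using that[of K] by auto
  qed
  obtain U where U: "C \<subseteq> U" "open U" "measure P U < measure P C + \<eta>/2"
  proof -
    have "(INF U \<in> {U. C \<subseteq> U \<and> open U}. emeasure P U) = emeasure P C"
      by (rule outer_regular[OF p(2) fin assms(2), symmetric])
    also have "\<dots> = ennreal (measure P C)" by (simp add: emeasure_eq_measure)
    also have "\<dots> < ennreal (measure P C + \<eta>/2)"
      using assms(3) by (subst ennreal_less_iff) auto
    finally obtain U where "C \<subseteq> U" "open U" "emeasure P U < ennreal (measure P C + \<eta>/2)"
      by (auto simp: INF_less_iff)
    then show ?thesis using that[of U] by (auto simp: emeasure_eq_measure ennreal_less_iff)
  qed
  have KP: "K \<in> sets P" using K(2) p(2) by (simp add: compact_imp_closed borel_closed)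
  have UP: "U \<in> sets P" using U(2) p(2) by simp
  have "measure P (U - K) = measure P U - measure P K"
    by (rule finite_measure_Diff) (use KP UP K U in auto)
  then have "measure P (U - K) < \<eta>" using K U by simp
  then have m: "measure P (U - K) < \<eta>" .
  show ?thesis
  proof (intro exI conjI)
    show "closed K" using K(2) by (rule compact_imp_closed)
    show "open U" by (rule U(2))
    show "K \<subseteq> C" by (rule K(1))
    show "C \<subseteq> U" by (rule U(1))
    show "measure P (U - K) < \<eta>" by (rule m)
  qed
qed

lemma open_nat_sing: "open {n::nat}"
proof (cases n)
  case 0
  then have "{n} = {..<1::nat}" by auto
  then show ?thesis by (simp add: open_lessThan)
next
  case (Suc m)
  then have "{n} = {m<..<n+1}" by auto
  then show ?thesis by (simp add: open_greaterThanLessThan)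
qed

lemma cont_g:
  fixes \<phi> :: "nat \<Rightarrow> 'a::metric_space \<Rightarrow> real"
  assumes "\<And>i. continuous_on UNIV (\<phi> i)"
  shows "continuous_on UNIV (\<lambda>z::'a \<times> nat. \<phi> (snd z) (fst z))"
proof -
  have "isCont (\<lambda>z::'a \<times> nat. \<phi> (snd z) (fst z)) z" for z
  proof -
    have "open (UNIV \<times> {snd z})" by (intro open_Times open_nat_sing) auto
    then have ev: "\<forall>\<^sub>F w in nhds z. w \<in> UNIV \<times> {snd z}"
      by (intro eventually_nhds_in_open) (auto simp: mem_Times_iff)
    have "\<forall>\<^sub>F w in nhds z. \<phi> (snd w) (fst w) = \<phi> (snd z) (fst w)"
      by (rule eventually_mono[OF ev]) auto
    moreover have "isCont (\<lambda>w. \<phi> (snd z) (fst w)) z"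
    proof -
      have "continuous_on UNIV (\<lambda>w::'a\<times>nat. \<phi> (snd z) (fst w))"
        by (intro continuous_on_compose2[OF assms[of "snd z"] continuous_on_fst]) (auto intro: continuous_on_id)
      then show ?thesis by (metis continuous_on_eq_continuous_at open_UNIV UNIV_I)
    qed
    ultimately show ?thesis using isCont_cong[where x=z and f="\<lambda>w. \<phi> (snd w) (fst w)" and g="\<lambda>w. \<phi> (snd z) (fst w)"] by simp
  qed
  then show ?thesis by (simp add: continuous_on_eq_continuous_at)
qed


lemma key_b:
  fixes P :: "'a::euclidean_space measure" and Qs :: "nat \<Rightarrow> 'a \<Rightarrow> nat"
  assumes P: "prob_borel P" and Qs: "\<And>n. quantizer M (Qs n)" and Q: "quantizer M Q"
    and W: "weak_conv_gen (\<lambda>n. joint P (Qs n)) (joint P Q)"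
  shows "(\<lambda>n. measure P {x. Qs n x \<noteq> Q x}) \<longlonglongrightarrow> 0"
proof -
  have p: "prob_space P" "sets P = sets borel" using P unfolding prob_borel_def by auto
  interpret prob_space P by (rule p(1))
  have sp: "space P = UNIV" by (rule sp_univ[OF p(2)])
  have pU: "measure P UNIV = 1" using prob_space sp by simp
  have M1: "1 \<le> M" using Q unfolding quantizer_def by (metis atLeastAtMost_iff order_trans)
  have Qm: "Q \<in> borel_measurable borel" and Qr: "\<And>x. Q x \<in> {1..M}" using Q unfolding quantizer_def by auto
  have Qsm: "\<And>n. Qs n \<in> borel_measurable borel" and Qsr: "\<And>n x. Qs n x \<in> {1..M}"
    using Qs unfolding quantizer_def by auto
  have Cb: "Q -` {i} \<in> sets borel" for i
  proof -
    have "{x \<in> space borel. Q x = i} \<in> sets borel" using Qm by measurable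
    then show ?thesis by (simp add: vimage_def)
  qed
  have Dm: "{x. Qs n x \<noteq> Q x} \<in> sets P" for n
  proof -
    have "{x \<in> space borel. Qs n x \<noteq> Q x} \<in> sets borel" using Qm Qsm[of n] by measurable
    then show ?thesis using p(2) by simp
  qed
  show ?thesis
  proof (rule order_tendstoI)
    fix a :: real assume "a < 0"
    then show "\<forall>\<^sub>F n in sequentially. a < measure P {x. Qs n x \<noteq> Q x}"
      by (intro always_eventually allI) (meson less_le_trans measure_nonneg)
  next
    fix e :: real assume e: "0 < e"
    define \<eta> where "\<eta> = e / (4 * real M)"
    have \<eta>: "\<eta> > 0" using e M1 unfolding \<eta>_def by auto
    have "\<forall>i. \<exists>F U. closed F \<and> open U \<and> F \<subseteq> Q -` {i} \<and> Q -` {i} \<subseteq> U \<and> measure P (U - F) < \<eta>"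
      using reg_approx[OF P Cb \<eta>] by blast
    then obtain F U where FU: "\<And>i. closed (F i)" "\<And>i. open (U i)" "\<And>i. F i \<subseteq> Q -` {i}"
      "\<And>i. Q -` {i} \<subseteq> U i" "\<And>i. measure P (U i - F i) < \<eta>"
      by metis
    have "\<forall>i. \<exists>\<phi>::'a\<Rightarrow>real. continuous_on UNIV \<phi> \<and> (\<forall>x. \<phi> x \<in> closed_segment 1 0) \<and>
             (\<forall>x\<in>F i. \<phi> x = 1) \<and> (\<forall>x\<in>- U i. \<phi> x = 0)"
    proof
      fix i
      have "F i \<inter> - U i = {}" using FU(3,4)[of i] by auto
      from Urysohn[OF FU(1)[of i] _ this, of 1 0] FU(2)[of i]
      show "\<exists>\<phi>::'a\<Rightarrow>real. continuous_on UNIV \<phi> \<and> (\<forall>x. \<phi> x \<in> closed_segment 1 0) \<and>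
             (\<forall>x\<in>F i. \<phi> x = 1) \<and> (\<forall>x\<in>- U i. \<phi> x = 0)"
        by (metis closed_Compl)
    qed
    then obtain \<phi> :: "nat \<Rightarrow> 'a \<Rightarrow> real" where \<phi>: "\<And>i. continuous_on UNIV (\<phi> i)"
      "\<And>i x. \<phi> i x \<in> closed_segment 1 0" "\<And>i x. x \<in> F i \<Longrightarrow> \<phi> i x = 1"
      "\<And>i x. x \<notin> U i \<Longrightarrow> \<phi> i x = 0"
      by (metis ComplI)
    have \<phi>01: "0 \<le> \<phi> i x" "\<phi> i x \<le> 1" for i x
      using \<phi>(2)[of i x] by (auto simp: closed_segment_eq_real_ivl)
    define g where "g = (\<lambda>z::'a\<times>nat. \<phi> (snd z) (fst z))"
    have gc: "continuous_on UNIV g" unfolding g_def by (rule cont_g[OF \<phi>(1)])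
    have gb: "bounded (range g)"
    proof -
      have "range g \<subseteq> {0..1}" using \<phi>01 unfolding g_def by auto
      then show ?thesis by (metis bounded_closed_interval bounded_subset)
    qed
    have gm: "g \<in> borel_measurable borel" by (rule borel_measurable_continuous_onI[OF gc])
    have conv: "(\<lambda>n. integral\<^sup>L (joint P (Qs n)) g) \<longlonglongrightarrow> integral\<^sup>L (joint P Q) g"
      using W gc gb unfolding weak_conv_gen_def by blast
    have int_eq: "integral\<^sup>L (joint P R) g = (\<integral>x. \<phi> (R x) x \<partial>P)" if R: "quantizer M R" for R
      unfolding joint_def by (subst integral_distr[OF quantizer_meas[OF R p(2)] gm]) (simp add: g_def)
    have phim: "(\<lambda>x. \<phi> (R x) x) \<in> borel_measurable P" if R: "quantizer M R" for R
    proof -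
      have "(\<lambda>x. g (x, R x)) \<in> borel_measurable P"
        using measurable_compose[OF quantizer_meas[OF R p(2)] gm] by simp
      then show ?thesis by (simp add: g_def)
    qed
    have phii: "integrable P (\<lambda>x. \<phi> (R x) x)" if R: "quantizer M R" for R
      by (rule integrable_const_bound[where B=1]) (use phim[OF R] \<phi>01 in auto)
    define E where "E i = U i - F i" for i
    have Em: "E i \<in> sets P" for i using FU(1,2)[of i] p(2) unfolding E_def by auto
    have Ei: "integrable P (indicator (E i) :: 'a \<Rightarrow> real)" for i
      using Em[of i] by (auto intro!: integrable_const_bound[where B=1] simp: indicator_def)
    have Si: "integrable P (\<lambda>x. \<Sum>i\<in>{1..M}. indicator (E i) x :: real)"
      by (rule Bochner_Integration.integrable_sum) (rule Ei)
    define S where "S = (\<Sum>i\<in>{1..M}. measure P (E i))"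
    have S: "S < e/4"
    proof -
      have "S < (\<Sum>i\<in>{1..M}. \<eta>)"
        unfolding S_def E_def by (rule sum_strict_mono) (use M1 FU(5) in auto)
      also have "\<dots> = e/4" using M1 unfolding \<eta>_def by simp
      finally show ?thesis .
    qed
    have intS: "(\<integral>x. (\<Sum>i\<in>{1..M}. indicator (E i) x) \<partial>P) = S"
      unfolding S_def using Em sp by (subst Bochner_Integration.integral_sum) (auto intro: Ei)
    have low: "1 - S \<le> (\<integral>x. \<phi> (Q x) x \<partial>P)"
    proof -
      have "(\<integral>x. 1 - (\<Sum>i\<in>{1..M}. indicator (E i) x) \<partial>P) \<le> (\<integral>x. \<phi> (Q x) x \<partial>P)"
      proof (rule integral_mono)
        show "integrable P (\<lambda>x. 1 - (\<Sum>i\<in>{1..M}. indicator (E i) x :: real))"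
          by (intro Bochner_Integration.integrable_diff Si) auto
        show "integrable P (\<lambda>x. \<phi> (Q x) x)" by (rule phii[OF Q])
        fix x
        show "1 - (\<Sum>i\<in>{1..M}. indicator (E i) x) \<le> \<phi> (Q x) x"
        proof (cases "x \<in> F (Q x)")
          case True
          then show ?thesis using \<phi>(3) by (simp add: sum_nonneg)
        next
          case False
          have "x \<in> U (Q x)" using FU(4)[of "Q x"] by auto
          then have "indicator (E (Q x)) x = (1::real)" using False unfolding E_def by simp
          moreover have "indicator (E (Q x)) x \<le> (\<Sum>i\<in>{1..M}. indicator (E i) x :: real)"
            by (rule member_le_sum) (use Qr in auto)
          ultimately show ?thesis using \<phi>01[of "Q x" x] by linarith
        qed
      qed
      moreover have "(\<integral>x. 1 - (\<Sum>i\<in>{1..M}. indicator (E i) x) \<partial>P) = 1 - S"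
        by (subst Bochner_Integration.integral_diff) (auto intro!: Si simp del: One_nat_def simp: intS prob_space pU)
      ultimately show ?thesis by simp
    qed
    have up: "(\<integral>x. \<phi> (Qs n x) x \<partial>P) \<le> 1 - measure P {x. Qs n x \<noteq> Q x} + S" for n
    proof -
      define D where "D = {x. Qs n x \<noteq> Q x}"
      have Di: "integrable P (indicator D :: 'a \<Rightarrow> real)"
        using Dm[of n] unfolding D_def by (auto intro!: integrable_const_bound[where B=1] simp: indicator_def)
      have "(\<integral>x. \<phi> (Qs n x) x \<partial>P) \<le> (\<integral>x. 1 - indicator D x + (\<Sum>i\<in>{1..M}. indicator (E i) x) \<partial>P)"
      proof (rule integral_mono)
        show "integrable P (\<lambda>x. 1 - indicator D x + (\<Sum>i\<in>{1..M}. indicator (E i) x :: real))"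
          by (intro Bochner_Integration.integrable_add Bochner_Integration.integrable_diff Si Di) auto
        show "integrable P (\<lambda>x. \<phi> (Qs n x) x)" by (rule phii[OF Qs])
        fix x
        have sn: "0 \<le> (\<Sum>i\<in>{1..M}. indicator (E i) x :: real)" by (simp add: sum_nonneg)
        show "\<phi> (Qs n x) x \<le> 1 - indicator D x + (\<Sum>i\<in>{1..M}. indicator (E i) x)"
        proof (cases "x \<in> D")
          case False
          then show ?thesis using \<phi>01[of "Qs n x" x] sn by simp
        next
          case True
          let ?j = "Qs n x"
          have nF: "x \<notin> F ?j" using True FU(3)[of ?j] unfolding D_def by auto
          show ?thesis
          proof (cases "x \<in> U ?j")
            case True
            then have "indicator (E ?j) x = (1::real)" using nF unfolding E_def by simp
            moreover have "indicator (E ?j) x \<le> (\<Sum>i\<in>{1..M}. indicator (E i) x :: real)"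
              by (rule member_le_sum) (use Qsr in auto)
            ultimately show ?thesis using \<phi>01[of ?j x] \<open>x \<in> D\<close> by simp
          next
            case False
            then show ?thesis using \<phi>(4)[OF False] \<open>x \<in> D\<close> sn by simp
          qed
        qed
      qed
      also have "\<dots> = 1 - measure P D + S"
        using Dm[of n] sp unfolding D_def[symmetric]
        by (subst Bochner_Integration.integral_add, (auto intro!: Si Di simp del: One_nat_def)[2],
            subst Bochner_Integration.integral_diff) (auto intro!: Di simp del: One_nat_def simp: intS prob_space pU)
      finally show ?thesis unfolding D_def .
    qed
    have "\<forall>\<^sub>F n in sequentially. integral\<^sup>L (joint P Q) g - e/4 < integral\<^sup>L (joint P (Qs n)) g"
      using order_tendstoD(1)[OF conv, of "integral\<^sup>L (joint P Q) g - e/4"] e by simp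
    then show "\<forall>\<^sub>F n in sequentially. measure P {x. Qs n x \<noteq> Q x} < e"
    proof (rule eventually_mono)
      fix n assume "integral\<^sup>L (joint P Q) g - e/4 < integral\<^sup>L (joint P (Qs n)) g"
      then have "(\<integral>x. \<phi> (Q x) x \<partial>P) - e/4 < (\<integral>x. \<phi> (Qs n x) x \<partial>P)"
        using int_eq[OF Q] int_eq[OF Qs] by simp
      then show "measure P {x. Qs n x \<noteq> Q x} < e" using low up[of n] S e by linarith
    qed
  qed
qed


lemma abs_cont_b:
  fixes P P' :: "'a::euclidean_space measure"
  assumes "has_pos_density P" "prob_borel P" "has_density P'" "prob_borel P'"
    and A: "\<And>n. A n \<in> sets borel" and lim: "(\<lambda>n. measure P (A n)) \<longlonglongrightarrow> 0"
  shows "(\<lambda>n. measure P' (A n)) \<longlonglongrightarrow> 0"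
proof -
  obtain p where p: "p \<in> borel_measurable borel" "\<And>x. 0 < p x" "P = density lborel (\<lambda>x. ennreal (p x))"
    using assms(1) unfolding has_pos_density_def by auto
  obtain q where q: "q \<in> borel_measurable borel" "\<And>x. 0 \<le> q x" "P' = density lborel (\<lambda>x. ennreal (q x))"
    using assms(3) unfolding has_density_def by auto
  interpret P: prob_space P using assms(2) unfolding prob_borel_def by auto
  interpret P': prob_space P' using assms(4) unfolding prob_borel_def by auto
  define B where "B K = {x. real K * p x < q x}" for K :: nat
  have Bs: "B K \<in> sets borel" for K
  proof -
    have "{x \<in> space borel. real K * p x < q x} \<in> sets borel" using p(1) q(1) by measurable
    then show ?thesis unfolding B_def by simp
  qed
  have sP': "sets P' = sets borel" using assms(4) unfolding prob_borel_def by auto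
  have sP: "sets P = sets borel" using assms(2) unfolding prob_borel_def by auto
  have Blim: "(\<lambda>K. measure P' (B K)) \<longlonglongrightarrow> 0"
  proof -
    have "(\<lambda>K. measure P' (B K)) \<longlonglongrightarrow> measure P' (\<Inter> (range B))"
    proof (rule finite_measure.finite_Lim_measure_decseq)
      show "finite_measure P'" by unfold_locales
      show "range B \<subseteq> sets P'" using Bs sP' by auto
      show "antimono_on UNIV B"
      proof (rule monotone_onI)
        fix r s :: nat assume "r \<le> s"
        show "B s \<subseteq> B r" unfolding B_def
        proof
          fix x assume "x \<in> {x. real s * p x < q x}"
          moreover have "real r * p x \<le> real s * p x" using \<open>r \<le> s\<close> p(2)[of x] by (intro mult_right_mono) auto
          ultimately show "x \<in> {x. real r * p x < q x}" by auto
        qed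
      qed
    qed
    moreover have "\<Inter> (range B) = {}"
    proof safe
      fix x assume x: "x \<in> \<Inter> (range B)"
      obtain K :: nat where "q x / p x < real K" using reals_Archimedean2 by blast
      then have "q x < real K * p x" using p(2)[of x] by (simp add: field_simps)
      moreover have "x \<in> B K" using x by auto
      ultimately show "x \<in> {}" unfolding B_def by auto
    qed
    ultimately show ?thesis by simp
  qed
  have bound: "measure P' S \<le> measure P' (B K) + real K * measure P S" if S: "S \<in> sets borel" for S K
  proof -
    have "emeasure P' S = (\<integral>\<^sup>+x. ennreal (q x) * indicator S x \<partial>lborel)"
      unfolding q(3) using S q(1) by (subst emeasure_density) auto
    also have "\<dots> \<le> (\<integral>\<^sup>+x. ennreal (q x) * indicator (B K) x + ennreal (real K) * (ennreal (p x) * indicator S x) \<partial>lborel)"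
    proof (rule nn_integral_mono)
      fix x
      show "ennreal (q x) * indicator S x \<le> ennreal (q x) * indicator (B K) x + ennreal (real K) * (ennreal (p x) * indicator S x)"
      proof (cases "x \<in> B K")
        case True
        then show ?thesis by (simp add: indicator_def)
      next
        case False
        then have "q x \<le> real K * p x" unfolding B_def by auto
        then have "ennreal (q x) \<le> ennreal (real K) * ennreal (p x)"
          using p(2)[of x] by (simp add: ennreal_mult[symmetric])
        then show ?thesis using False by (simp add: indicator_def)
      qed
    qed
    also have "\<dots> = (\<integral>\<^sup>+x. ennreal (q x) * indicator (B K) x \<partial>lborel) + ennreal (real K) * (\<integral>\<^sup>+x. ennreal (p x) * indicator S x \<partial>lborel)"
      using p(1) q(1) Bs S by (subst nn_integral_add) (auto simp: nn_integral_cmult)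
    also have "\<dots> = emeasure P' (B K) + ennreal (real K) * emeasure P S"
      unfolding q(3) p(3) using Bs S p(1) q(1) by (simp add: emeasure_density)
    finally have "ennreal (measure P' S) \<le> ennreal (measure P' (B K)) + ennreal (real K) * ennreal (measure P S)"
      by (simp add: P.emeasure_eq_measure P'.emeasure_eq_measure)
    moreover have e1: "ennreal (real K * measure P S) = ennreal (real K) * ennreal (measure P S)"
      by (rule ennreal_mult) auto
    moreover have e2: "ennreal (measure P' (B K) + real K * measure P S) = ennreal (measure P' (B K)) + ennreal (real K * measure P S)"
      by (rule ennreal_plus) auto
    ultimately have le: "ennreal (measure P' S) \<le> ennreal (measure P' (B K) + real K * measure P S)"
      by (simp only: e1 e2)
    have nn: "0 \<le> measure P' (B K) + real K * measure P S" by simp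
    show ?thesis using le unfolding ennreal_le_iff[OF nn] .
  qed
  show ?thesis
  proof (rule order_tendstoI)
    fix a :: real assume "a < 0"
    then show "\<forall>\<^sub>F n in sequentially. a < measure P' (A n)"
      by (intro always_eventually allI) (meson less_le_trans measure_nonneg)
  next
    fix e :: real assume e: "0 < e"
    obtain K where K: "measure P' (B K) < e/2"
      using order_tendstoD(2)[OF Blim, of "e/2"] e by (auto simp: eventually_sequentially)
    have "\<forall>\<^sub>F n in sequentially. measure P (A n) < e / (2 * (real K + 1))"
      by (rule order_tendstoD(2)[OF lim]) (use e in auto)
    then show "\<forall>\<^sub>F n in sequentially. measure P' (A n) < e"
    proof (rule eventually_mono)
      fix n assume n: "measure P (A n) < e / (2 * (real K + 1))"
      have "real K * measure P (A n) \<le> (real K + 1) * measure P (A n)"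
        by (intro mult_right_mono) auto
      also have "\<dots> < (real K + 1) * (e / (2 * (real K + 1)))"
        by (intro mult_strict_left_mono n) auto
      also have "\<dots> = e/2" by (simp add: field_simps)
      finally show "measure P' (A n) < e" using bound[OF A, of n K] K by linarith
    qed
  qed
qed

lemma tv_self: "tv_dist P P = 0"
proof -
  have "sets P \<noteq> {}" using sets.empty_sets by blast
  then show ?thesis unfolding tv_dist_def by simp
qed

lemma squeeze0:
  fixes a b :: "nat \<Rightarrow> real"
  assumes "\<And>n. 0 \<le> a n" "\<And>n. a n \<le> b n" "b \<longlonglongrightarrow> 0"
  shows "a \<longlonglongrightarrow> 0"
  by (rule tendsto_sandwich[OF always_eventually always_eventually tendsto_const assms(3)]) (use assms in auto)

lemma prob_borel_joint: "prob_borel P \<Longrightarrow> quantizer M Q \<Longrightarrow> prob_borel (joint P Q)"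
  unfolding prob_borel_def joint_def
  by (auto intro!: prob_space.prob_space_distr quantizer_meas)

lemma part_b:
  fixes P :: "'a::euclidean_space measure"
  assumes "\<forall>n. Qs n \<in> convex_quantizers M" "Q \<in> convex_quantizers M"
    "prob_borel P" "has_density P" "weak_conv_gen (\<lambda>n. joint P (Qs n)) (joint P Q)"
  shows "((\<lambda>n. tv_dist (joint P (Qs n)) (joint P Q)) \<longlonglongrightarrow> 0) \<and>
          (has_pos_density P \<longrightarrow>
             (\<forall>P'. prob_borel P' \<and> has_density P' \<longrightarrow>
                (\<lambda>n. tv_dist (joint P' (Qs n)) (joint P' Q)) \<longlonglongrightarrow> 0))"
proof -
  have Qs: "quantizer M (Qs n)" for n
    using assms(1) unfolding convex_quantizers_def mem_Collect_eq by blast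
  have Q: "quantizer M Q"
    using assms(2) unfolding convex_quantizers_def mem_Collect_eq by blast
  have lim: "(\<lambda>n. measure P {x. Qs n x \<noteq> Q x}) \<longlonglongrightarrow> 0"
    by (rule key_b[OF assms(3) Qs Q assms(5)])
  have Db: "{x. Qs n x \<noteq> Q x} \<in> sets borel" for n
  proof -
    have "Qs n \<in> borel_measurable borel" "Q \<in> borel_measurable borel"
      using Qs[of n] Q unfolding quantizer_def by auto
    then have "{x \<in> space borel. Qs n x \<noteq> Q x} \<in> sets borel"
      by measurable
    then show ?thesis by simp
  qed
  have gen: "(\<lambda>n. tv_dist (joint P' (Qs n)) (joint P' Q)) \<longlonglongrightarrow> 0"
    if P': "prob_borel P'" "(\<lambda>n. measure P' {x. Qs n x \<noteq> Q x}) \<longlonglongrightarrow> 0" for P' :: "'a measure"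
  proof (rule squeeze0)
    show "0 \<le> tv_dist (joint P' (Qs n)) (joint P' Q)" for n
      using prob_borel_joint[OF P'(1) Qs] prob_borel_joint[OF P'(1) Q]
      by (intro tv_nonneg) (auto simp: prob_borel_def)
    show "tv_dist (joint P' (Qs n)) (joint P' Q) \<le> 2 * measure P' {x. Qs n x \<noteq> Q x}" for n
      using joint_tv[OF P'(1) P'(1) Qs Q] by (simp add: tv_self)
    show "(\<lambda>n. 2 * measure P' {x. Qs n x \<noteq> Q x}) \<longlonglongrightarrow> 0"
      using tendsto_mult_right_zero[OF P'(2), of 2] by (simp add: mult.commute)
  qed
  show ?thesis
  proof
    show "(\<lambda>n. tv_dist (joint P (Qs n)) (joint P Q)) \<longlonglongrightarrow> 0" by (rule gen[OF assms(3) lim])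
    show "has_pos_density P \<longrightarrow> (\<forall>P'. prob_borel P' \<and> has_density P' \<longrightarrow>
                (\<lambda>n. tv_dist (joint P' (Qs n)) (joint P' Q)) \<longlonglongrightarrow> 0)"
      using gen abs_cont_b[OF _ assms(3) _ _ Db lim] by blast
  qed
qed

lemma part_c:
  fixes P :: "'a::euclidean_space measure"
  assumes "\<forall>n. Qs n \<in> convex_quantizers M" "Q \<in> convex_quantizers M"
      "prob_borel P" "has_pos_density P"
      "weak_conv_gen (\<lambda>n. joint P (Qs n)) (joint P Q)"
      "\<forall>n. prob_borel (Ps' n)" "prob_borel P'" "has_density P'"
      "(\<lambda>n. tv_dist (Ps' n) P') \<longlonglongrightarrow> 0"
  shows "(\<lambda>n. tv_dist (joint (Ps' n) (Qs n)) (joint P' Q)) \<longlonglongrightarrow> 0"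
proof -
  have Qs: "quantizer M (Qs n)" for n
    using assms(1) unfolding convex_quantizers_def mem_Collect_eq by blast
  have Q: "quantizer M Q"
    using assms(2) unfolding convex_quantizers_def mem_Collect_eq by blast
  have lim: "(\<lambda>n. measure P {x. Qs n x \<noteq> Q x}) \<longlonglongrightarrow> 0"
    by (rule key_b[OF assms(3) Qs Q assms(5)])
  have Db: "{x. Qs n x \<noteq> Q x} \<in> sets borel" for n
  proof -
    have "Qs n \<in> borel_measurable borel" "Q \<in> borel_measurable borel"
      using Qs[of n] Q unfolding quantizer_def by auto
    then have "{x \<in> space borel. Qs n x \<noteq> Q x} \<in> sets borel"
      by measurable
    then show ?thesis by simp
  qed
  have lim': "(\<lambda>n. measure P' {x. Qs n x \<noteq> Q x}) \<longlonglongrightarrow> 0"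
    by (rule abs_cont_b[OF assms(4,3,8,7) Db lim])
  show ?thesis
  proof (rule squeeze0)
    show "0 \<le> tv_dist (joint (Ps' n) (Qs n)) (joint P' Q)" for n
      using prob_borel_joint[OF assms(6)[rule_format] Qs] prob_borel_joint[OF assms(7) Q]
      by (intro tv_nonneg) (auto simp: prob_borel_def)
    show "tv_dist (joint (Ps' n) (Qs n)) (joint P' Q) \<le> tv_dist (Ps' n) P' + 2 * measure P' {x. Qs n x \<noteq> Q x}" for n
      using joint_tv[OF assms(6)[rule_format] assms(7) Qs Q] by simp
    show "(\<lambda>n. tv_dist (Ps' n) P' + 2 * measure P' {x. Qs n x \<noteq> Q x}) \<longlonglongrightarrow> 0"
      using tendsto_add[OF assms(9) tendsto_mult_right_zero[OF lim', of 2]] by (simp add: mult.commute)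
  qed
qed


lemma meas_borel: "sets M = sets borel \<Longrightarrow> f \<in> borel_measurable borel \<Longrightarrow> f \<in> borel_measurable M"
  using measurable_cong_sets[of M borel borel borel] by simp

lemma closed_approx_lim:
  fixes \<mu> :: "'a::euclidean_space measure"
  assumes "finite_measure \<mu>" "sets \<mu> = sets borel" "closed F" "F \<noteq> {}"
  shows "(\<lambda>k. \<integral>x. max 0 (1 - real k * infdist x F) \<partial>\<mu>) \<longlonglongrightarrow> measure \<mu> F"
proof -
  interpret finite_measure \<mu> by (rule assms(1))
  have sp: "space \<mu> = UNIV" by (rule sp_univ[OF assms(2)])
  have "(\<lambda>k. \<integral>x. max 0 (1 - real k * infdist x F) \<partial>\<mu>) \<longlonglongrightarrow> (\<integral>x. indicator F x \<partial>\<mu>)"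
  proof (rule integral_dominated_convergence[where w="\<lambda>_. 1"])
    show "indicat_real F \<in> borel_measurable \<mu>"
      by (rule meas_borel[OF assms(2)], rule borel_measurable_indicator) (use assms(3) in simp)
    show "(\<lambda>x. max 0 (1 - real k * infdist x F)) \<in> borel_measurable \<mu>" for k
      by (rule meas_borel[OF assms(2)], rule borel_measurable_continuous_onI) (intro continuous_intros)
    show "integrable \<mu> (\<lambda>_. 1::real)" by simp
    show "AE x in \<mu>. norm (max 0 (1 - real k * infdist x F)) \<le> 1" for k
      using infdist_nonneg[of _ F] by (intro AE_I2) (auto simp: mult_nonneg_nonneg)
    show "AE x in \<mu>. (\<lambda>k. max 0 (1 - real k * infdist x F)) \<longlonglongrightarrow> indicator F x"
    proof (intro AE_I2)
      fix x
      show "(\<lambda>k. max 0 (1 - real k * infdist x F)) \<longlonglongrightarrow> indicator F x"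
      proof (cases "x \<in> F")
        case True
        then show ?thesis by simp
      next
        case False
        then have pos: "infdist x F > 0" using infdist_pos_not_in_closed assms(3,4) by blast
        obtain K :: nat where K: "1 / infdist x F < real K" using reals_Archimedean2 by blast
        have "\<forall>\<^sub>F k in sequentially. max 0 (1 - real k * infdist x F) = 0"
          unfolding eventually_sequentially
        proof (intro exI allI impI)
          fix k assume "K \<le> k"
          then have "1 / infdist x F < real k" using K by linarith
          then have "1 < real k * infdist x F" using pos by (simp add: field_simps)
          then show "max 0 (1 - real k * infdist x F) = 0" by simp
        qed
        then show ?thesis using False by (simp add: tendsto_eventually)
      qed
    qed
  qed
  moreover have "(\<integral>x. indicator F x \<partial>\<mu>) = measure \<mu> F" using sp by simp
  ultimately show ?thesis by simp
qed

lemma meas_eq: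
  fixes \<mu> \<nu> :: "'a::euclidean_space measure"
  assumes "finite_measure \<mu>" "sets \<mu> = sets borel" "finite_measure \<nu>" "sets \<nu> = sets borel"
    and eq: "\<And>\<phi> :: 'a \<Rightarrow> real. continuous_on UNIV \<phi> \<Longrightarrow> bounded (range \<phi>) \<Longrightarrow> (\<integral>x. \<phi> x \<partial>\<mu>) = (\<integral>x. \<phi> x \<partial>\<nu>)"
    and B: "B \<in> sets borel"
  shows "emeasure \<mu> B = emeasure \<nu> B"
proof -
  interpret m: finite_measure \<mu> by (rule assms(1))
  interpret n: finite_measure \<nu> by (rule assms(3))
  have closed_eq: "measure \<mu> F = measure \<nu> F" if F: "closed F" for F
  proof (cases "F = {}")
    case True then show ?thesis by simp
  next
    case False
    have "(\<integral>x. max 0 (1 - real k * infdist x F) \<partial>\<mu>) = (\<integral>x. max 0 (1 - real k * infdist x F) \<partial>\<nu>)" for k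
    proof (rule eq)
      show "continuous_on UNIV (\<lambda>x. max 0 (1 - real k * infdist x F))" by (intro continuous_intros)
      have "range (\<lambda>x. max 0 (1 - real k * infdist x F)) \<subseteq> {0..1}"
        using infdist_nonneg[of _ F] by (auto simp: mult_nonneg_nonneg)
      then show "bounded (range (\<lambda>x. max 0 (1 - real k * infdist x F)))"
        by (metis bounded_closed_interval bounded_subset)
    qed
    then have "(\<lambda>k. \<integral>x. max 0 (1 - real k * infdist x F) \<partial>\<mu>) = (\<lambda>k. \<integral>x. max 0 (1 - real k * infdist x F) \<partial>\<nu>)"
      by (rule ext)
    then have "(\<lambda>k. \<integral>x. max 0 (1 - real k * infdist x F) \<partial>\<mu>) \<longlonglongrightarrow> measure \<nu> F"
      using closed_approx_lim[OF assms(3,4) F False] by simp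
    then show ?thesis
      using closed_approx_lim[OF assms(1,2) F False] by (rule LIMSEQ_unique[rotated])
  qed
  have fin1: "emeasure \<mu> (space \<mu>) \<noteq> \<infinity>" and fin2: "emeasure \<nu> (space \<nu>) \<noteq> \<infinity>" by auto
  have "emeasure \<mu> B = (SUP K \<in> {K. K \<subseteq> B \<and> compact K}. emeasure \<mu> K)"
    by (rule inner_regular[OF assms(2) fin1 B])
  also have "\<dots> = (SUP K \<in> {K. K \<subseteq> B \<and> compact K}. emeasure \<nu> K)"
  proof (rule SUP_cong[OF refl])
    fix K assume "K \<in> {K. K \<subseteq> B \<and> compact K}"
    then have K: "closed K" by (auto intro: compact_imp_closed)
    then have "K \<in> sets \<mu>" "K \<in> sets \<nu>" using assms(2,4) by auto
    then show "emeasure \<mu> K = emeasure \<nu> K"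
      using closed_eq[OF K] by (simp add: m.emeasure_eq_measure n.emeasure_eq_measure)
  qed
  also have "\<dots> = emeasure \<nu> B"
    by (rule inner_regular[OF assms(4) fin2 B, symmetric])
  finally show ?thesis .
qed


lemma int_dens:
  fixes f :: "'a::euclidean_space \<Rightarrow> real"
  assumes "f \<in> borel_measurable borel" "\<And>x. 0 \<le> f x" "\<phi> \<in> borel_measurable borel"
  shows "integral\<^sup>L (density lborel (\<lambda>x. ennreal (f x))) \<phi> = (\<integral>y. f y * \<phi> y \<partial>lborel)"
  using assms by (subst integral_density) auto

lemma nn_int_one:
  fixes f :: "'a::euclidean_space \<Rightarrow> real"
  assumes "f \<in> borel_measurable borel" "prob_space (density lborel (\<lambda>x. ennreal (f x)))"
  shows "(\<integral>\<^sup>+x. ennreal (f x) \<partial>lborel) = 1"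
proof -
  have "emeasure (density lborel (\<lambda>x. ennreal (f x))) UNIV = 1"
    using prob_space.emeasure_space_1[OF assms(2)] by simp
  then show ?thesis using assms(1) by (subst (asm) emeasure_density) auto
qed

lemma dens_integrable:
  fixes f :: "'a::euclidean_space \<Rightarrow> real"
  assumes "f \<in> borel_measurable borel" "\<And>x. 0 \<le> f x" "(\<integral>\<^sup>+x. ennreal (f x) \<partial>lborel) = 1"
  shows "integrable lborel f"
  using assms by (intro integrableI_bounded) auto

lemma cball_integrable: "integrable lborel (\<lambda>y. C * indicator (cball (x::'a::euclidean_space) r) y :: real)"
  using emeasure_bounded_finite[of "cball x r"] by (intro integrable_mult_right integrable_real_indicator) auto

lemma bump:
  fixes x :: "'a::euclidean_space"
  assumes "\<delta> > 0"
  shows "continuous_on UNIV (\<lambda>y. max 0 (1 - dist x y / \<delta>))"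
    and "\<And>y. 0 \<le> max 0 (1 - dist x y / \<delta>)"
    and "\<And>y. max 0 (1 - dist x y / \<delta>) \<le> 1"
    and "\<And>y. 0 < max 0 (1 - dist x y / \<delta>) \<Longrightarrow> dist x y < \<delta>"
    and "integrable lborel (\<lambda>y. max 0 (1 - dist x y / \<delta>))"
    and "0 < (\<integral>y. max 0 (1 - dist x y / \<delta>) \<partial>lborel)"
proof -
  let ?\<rho> = "\<lambda>y. max 0 (1 - dist x y / \<delta>)"
  show c: "continuous_on UNIV ?\<rho>" by (intro continuous_intros) (use assms in auto)
  show "\<And>y. 0 \<le> ?\<rho> y" by simp
  show "\<And>y. ?\<rho> y \<le> 1" using assms by simp
  show lt: "\<And>y. 0 < ?\<rho> y \<Longrightarrow> dist x y < \<delta>" using assms by (auto simp: less_max_iff_disj divide_less_eq_1)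
  have m: "?\<rho> \<in> borel_measurable lborel"
    using borel_measurable_continuous_onI[OF c] by simp
  show i: "integrable lborel ?\<rho>"
  proof (rule Bochner_Integration.integrable_bound[OF cball_integrable[of 1 x \<delta>] m])
    show "AE y in lborel. norm (?\<rho> y) \<le> norm (1 * indicator (cball x \<delta>) y :: real)"
    proof (intro AE_I2)
      fix y
      show "norm (?\<rho> y) \<le> norm (1 * indicator (cball x \<delta>) y :: real)"
      proof (cases "?\<rho> y = 0")
        case False
        then have "dist x y < \<delta>" using lt[of y] by (metis max.cobounded1 order_le_less)
        then show ?thesis using assms by (auto simp: indicator_def)
      qed simp
    qed
  qed
  have bpos: "0 < measure lborel (ball x (\<delta>/2))"
    using assms by (simp add: measure_def emeasure_ball enn2real_mult)
  have "(1/2) * measure lborel (ball x (\<delta>/2)) = (\<integral>y. (1/2) * indicator (ball x (\<delta>/2)) y \<partial>lborel)"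
    by (simp add: emeasure_lborel_ball_finite)
  also have "\<dots> \<le> (\<integral>y. ?\<rho> y \<partial>lborel)"
  proof (rule integral_mono[OF _ i])
    show "integrable lborel (\<lambda>y. (1/2) * indicator (ball x (\<delta>/2)) y :: real)"
      using emeasure_lborel_ball_finite[of x "\<delta>/2"] by (intro integrable_mult_right integrable_real_indicator) auto
    fix y show "(1/2) * indicator (ball x (\<delta>/2)) y \<le> ?\<rho> y"
    proof (cases "y \<in> ball x (\<delta>/2)")
      case True
      then have "dist x y < \<delta>/2" by simp
      then have "dist x y / \<delta> < 1/2" using assms by (simp add: divide_less_eq)
      then show ?thesis using True by (simp add: indicator_def le_max_iff_disj)
    next
      case False
      then show ?thesis by (simp add: indicator_def)
    qed
  qed
  finally show "0 < (\<integral>y. ?\<rho> y \<partial>lborel)" using bpos by linarith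
qed


lemma ptwise:
  fixes f :: "nat \<Rightarrow> 'a::euclidean_space \<Rightarrow> real"
  assumes fm: "\<And>n. f n \<in> borel_measurable borel" and fnn: "\<And>n x. 0 \<le> f n x" and fC: "\<And>n x. f n x \<le> C"
    and eqc: "\<forall>e>0. \<exists>\<delta>>0. \<forall>n x y. dist x y < \<delta> \<longrightarrow> \<bar>f n x - f n y\<bar> < e"
    and wk: "\<And>\<phi>. continuous_on UNIV \<phi> \<Longrightarrow> bounded (range \<phi>) \<Longrightarrow> convergent (\<lambda>n. \<integral>y. f n y * \<phi> y \<partial>lborel)"
  shows "convergent (\<lambda>n. f n x)"
proof (rule Cauchy_convergent, rule CauchyI)
  fix e :: real assume e: "0 < e"
  define \<epsilon> where "\<epsilon> = e / 4"
  have \<epsilon>: "\<epsilon> > 0" using e unfolding \<epsilon>_def by simp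
  obtain \<delta> where \<delta>: "\<delta> > 0" "\<And>n x y. dist x y < \<delta> \<Longrightarrow> \<bar>f n x - f n y\<bar> < \<epsilon>"
    using eqc \<epsilon> by blast
  define \<rho> where "\<rho> = (\<lambda>y. max 0 (1 - dist x y / \<delta>))"
  have bp1: "continuous_on UNIV \<rho>" unfolding \<rho>_def by (rule bump(1)[OF \<delta>(1)])
  have bp2: "\<And>y. 0 \<le> \<rho> y" unfolding \<rho>_def by (rule bump(2)[OF \<delta>(1)])
  have bp3: "\<And>y. \<rho> y \<le> 1" unfolding \<rho>_def by (rule bump(3)[OF \<delta>(1)])
  have bp4: "\<And>y. 0 < \<rho> y \<Longrightarrow> dist x y < \<delta>" unfolding \<rho>_def by (rule bump(4)[OF \<delta>(1)])
  have bp5: "integrable lborel \<rho>" unfolding \<rho>_def by (rule bump(5)[OF \<delta>(1)])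
  have bp6: "0 < (\<integral>y. \<rho> y \<partial>lborel)" unfolding \<rho>_def by (rule bump(6)[OF \<delta>(1)])
  note bp = bp1 bp2 bp3 bp4 bp5 bp6
  define c where "c = (\<integral>y. \<rho> y \<partial>lborel)"
  have c: "c > 0" using bp(6) unfolding c_def .
  define a where "a n = (\<integral>y. f n y * \<rho> y \<partial>lborel)" for n
  have C0: "0 \<le> C" using fnn fC order_trans by blast
  have \<rho>m: "\<rho> \<in> borel_measurable lborel" using borel_measurable_continuous_onI[OF bp(1)] by simp
  have fi: "integrable lborel (\<lambda>y. f n y * \<rho> y)" for n
  proof (rule Bochner_Integration.integrable_bound[OF integrable_mult_right[OF bp(5), of C]])
    show "(\<lambda>y. f n y * \<rho> y) \<in> borel_measurable lborel" using fm[of n] \<rho>m by simp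
    show "AE y in lborel. norm (f n y * \<rho> y) \<le> norm (C * \<rho> y)"
    proof (intro AE_I2)
      fix y
      have "norm (f n y * \<rho> y) = f n y * \<rho> y" using fnn[of n y] bp(2)[of y] by simp
      also have "\<dots> \<le> C * \<rho> y" by (rule mult_right_mono[OF fC bp(2)])
      also have "\<dots> = norm (C * \<rho> y)" using C0 bp(2)[of y] by simp
      finally show "norm (f n y * \<rho> y) \<le> norm (C * \<rho> y)" .
    qed
  qed
  have "convergent a"
  proof -
    have "range \<rho> \<subseteq> {0..1}" using bp(2,3) by auto
    then have "bounded (range \<rho>)" by (metis bounded_closed_interval bounded_subset)
    then show ?thesis unfolding a_def using wk[OF bp(1)] by blast
  qed
  then have "Cauchy a" by (rule convergent_Cauchy)
  then obtain N where N: "\<And>m n. m \<ge> N \<Longrightarrow> n \<ge> N \<Longrightarrow> \<bar>a m - a n\<bar> < c * \<epsilon>"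
    using CauchyD[of a "c * \<epsilon>"] c \<epsilon> by auto
  have key: "\<bar>a n - c * f n x\<bar> \<le> c * \<epsilon>" for n
  proof -
    have "a n - c * f n x = (\<integral>y. (f n y - f n x) * \<rho> y \<partial>lborel)"
    proof -
      have "(\<integral>y. (f n y - f n x) * \<rho> y \<partial>lborel) = (\<integral>y. f n y * \<rho> y - f n x * \<rho> y \<partial>lborel)"
        by (simp add: algebra_simps)
      also have "\<dots> = a n - (\<integral>y. f n x * \<rho> y \<partial>lborel)"
        unfolding a_def by (rule Bochner_Integration.integral_diff[OF fi integrable_mult_right[OF bp(5)]])
      also have "(\<integral>y. f n x * \<rho> y \<partial>lborel) = f n x * c" unfolding c_def by simp
      finally show ?thesis by simp
    qed
    also have "\<bar>\<dots>\<bar> \<le> (\<integral>y. norm ((f n y - f n x) * \<rho> y) \<partial>lborel)"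
      using integral_norm_bound[of lborel "\<lambda>y. (f n y - f n x) * \<rho> y"] by simp
    also have "\<dots> \<le> (\<integral>y. \<epsilon> * \<rho> y \<partial>lborel)"
    proof (rule integral_mono)
      show "integrable lborel (\<lambda>y. norm ((f n y - f n x) * \<rho> y))"
        using Bochner_Integration.integrable_diff[OF fi integrable_mult_right[OF bp(5), of "f n x"]]
        by (simp add: algebra_simps)
      show "integrable lborel (\<lambda>y. \<epsilon> * \<rho> y)" by (rule integrable_mult_right[OF bp(5)])
      fix y
      show "norm ((f n y - f n x) * \<rho> y) \<le> \<epsilon> * \<rho> y"
      proof (cases "\<rho> y = 0")
        case True then show ?thesis by simp
      next
        case False
        then have "0 < \<rho> y" using bp(2)[of y] by linarith
        then have "dist x y < \<delta>" by (rule bp(4))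
        then have "\<bar>f n y - f n x\<bar> \<le> \<epsilon>" using \<delta>(2)[of y x n] by (simp add: dist_commute)
        then show ?thesis using bp(2)[of y] by (simp add: abs_mult mult_right_mono)
      qed
    qed
    also have "\<dots> = c * \<epsilon>" unfolding c_def by simp
    finally show ?thesis .
  qed
  show "\<exists>M. \<forall>m\<ge>M. \<forall>n\<ge>M. norm (f m x - f n x) < e"
  proof (intro exI allI impI)
    fix m n assume mn: "N \<le> m" "N \<le> n"
    have "c * \<bar>f m x - f n x\<bar> = \<bar>c * f m x - c * f n x\<bar>"
      using c by (simp add: abs_mult right_diff_distrib[symmetric])
    also have "\<dots> \<le> \<bar>a m - c * f m x\<bar> + \<bar>a m - a n\<bar> + \<bar>a n - c * f n x\<bar>" by linarith
    also have "\<dots> < c * \<epsilon> + c * \<epsilon> + c * \<epsilon>" using key[of m] key[of n] N[OF mn] by linarith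
    also have "\<dots> = c * (3 * \<epsilon>)" by simp
    finally have "\<bar>f m x - f n x\<bar> < 3 * \<epsilon>" using c by simp
    then show "norm (f m x - f n x) < e" using \<epsilon> unfolding \<epsilon>_def by simp
  qed
qed


lemma part_a:
  fixes f :: "nat \<Rightarrow> 'a::euclidean_space \<Rightarrow> real" and \<mu> :: "'a measure"
  assumes hf: "\<forall>n. f n \<in> borel_measurable borel \<and> (\<forall>x. 0 \<le> f n x) \<and>
           prob_space (density lborel (\<lambda>x. ennreal (f n x)))"
    and hC: "\<exists>C. \<forall>n x. f n x \<le> C"
    and eqc: "\<forall>e>0. \<exists>\<delta>>0. \<forall>n x y. dist x y < \<delta> \<longrightarrow> \<bar>f n x - f n y\<bar> < e"
    and hmu: "prob_borel \<mu>"
    and W: "weak_conv_gen (\<lambda>n. density lborel (\<lambda>x. ennreal (f n x))) \<mu>"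
  shows "(\<lambda>n. tv_dist (density lborel (\<lambda>x. ennreal (f n x))) \<mu>) \<longlonglongrightarrow> 0"
proof -
  have fm: "\<And>n. f n \<in> borel_measurable borel" and fnn: "\<And>n x. 0 \<le> f n x"
    and fp: "\<And>n. prob_space (density lborel (\<lambda>x. ennreal (f n x)))" using hf by auto
  obtain C where fC: "\<And>n x. f n x \<le> C" using hC by auto
  have C0: "0 \<le> C" using fnn fC order_trans by blast
  have mu: "prob_space \<mu>" "sets \<mu> = sets borel" using hmu unfolding prob_borel_def by auto
  interpret mu: prob_space \<mu> by (rule mu(1))
  have spmu: "space \<mu> = UNIV" by (rule sp_univ[OF mu(2)])
  have fone: "(\<integral>\<^sup>+x. ennreal (f n x) \<partial>lborel) = 1" for n by (rule nn_int_one[OF fm fp])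
  have fint: "integrable lborel (f n)" for n by (rule dens_integrable[OF fm fnn fone])
  have weak: "(\<lambda>n. \<integral>y. f n y * \<phi> y \<partial>lborel) \<longlonglongrightarrow> (\<integral>y. \<phi> y \<partial>\<mu>)"
    if "continuous_on UNIV \<phi>" "bounded (range \<phi>)" for \<phi> :: "'a \<Rightarrow> real"
  proof -
    have "(\<lambda>n. integral\<^sup>L (density lborel (\<lambda>x. ennreal (f n x))) \<phi>) \<longlonglongrightarrow> integral\<^sup>L \<mu> \<phi>"
      using W that unfolding weak_conv_gen_def by blast
    moreover have "integral\<^sup>L (density lborel (\<lambda>x. ennreal (f n x))) \<phi> = (\<integral>y. f n y * \<phi> y \<partial>lborel)" for n
      by (rule int_dens[OF fm fnn borel_measurable_continuous_onI[OF that(1)]])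
    ultimately show ?thesis by simp
  qed
  have conv: "convergent (\<lambda>n. f n x)" for x
    by (rule ptwise[OF fm fnn fC eqc]) (use weak convergent_def in blast)
  define g where "g x = lim (\<lambda>n. f n x)" for x
  have gl: "(\<lambda>n. f n x) \<longlonglongrightarrow> g x" for x using conv[of x] unfolding g_def convergent_LIMSEQ_iff .
  have gm: "g \<in> borel_measurable borel"
    by (rule borel_measurable_LIMSEQ_real[OF gl fm]) 
  have gnn: "0 \<le> g x" for x by (rule LIMSEQ_le_const[OF gl]) (use fnn in auto)
  have gC: "g x \<le> C" for x by (rule LIMSEQ_le_const2[OF gl]) (use fC in auto)
  have gnn_le: "(\<integral>\<^sup>+x. ennreal (g x) \<partial>lborel) \<le> 1"
  proof -
    have "(\<integral>\<^sup>+x. ennreal (g x) \<partial>lborel) = (\<integral>\<^sup>+x. liminf (\<lambda>n. ennreal (f n x)) \<partial>lborel)"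
    proof (rule nn_integral_cong)
      fix x
      have "(\<lambda>n. ennreal (f n x)) \<longlonglongrightarrow> ennreal (g x)" using gl[of x] by (rule tendsto_ennrealI)
      then show "ennreal (g x) = liminf (\<lambda>n. ennreal (f n x))"
        by (rule lim_imp_Liminf[symmetric, rotated]) simp
    qed
    also have "\<dots> \<le> liminf (\<lambda>n. \<integral>\<^sup>+x. ennreal (f n x) \<partial>lborel)"
      by (rule nn_integral_liminf) (use fm in simp)
    also have "\<dots> = 1" using Liminf_const[of sequentially "1::ennreal"] by (simp add: fone)
    finally show ?thesis .
  qed
  have gint: "integrable lborel g"
  proof (rule integrableI_bounded)
    show "g \<in> borel_measurable lborel" using gm by simp
    have "(\<integral>\<^sup>+x. ennreal (g x) \<partial>lborel) < \<top>"
      using gnn_le ennreal_one_less_top by (rule order.strict_trans1)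
    then show "(\<integral>\<^sup>+x. ennreal (norm (g x)) \<partial>lborel) < \<infinity>" using gnn by simp
  qed
  have gI: "ennreal (\<integral>x. g x \<partial>lborel) = (\<integral>\<^sup>+x. ennreal (g x) \<partial>lborel)"
    using gint gnn by (simp add: nn_integral_eq_integral)
  have gle1: "(\<integral>x. g x \<partial>lborel) \<le> 1" using gnn_le gI by (metis ennreal_le_1)
  \<comment> \<open>tightness\<close>
  define \<psi> where "\<psi> R y = max 0 (min 1 (real R - norm y))" for R :: nat and y :: 'a
  have \<psi>c: "continuous_on UNIV (\<psi> R)" for R unfolding \<psi>_def by (intro continuous_intros)
  have \<psi>01: "0 \<le> \<psi> R y" "\<psi> R y \<le> 1" for R y unfolding \<psi>_def by auto
  have \<psi>b: "bounded (range (\<psi> R))" for R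
  proof -
    have "range (\<psi> R) \<subseteq> {0..1}" using \<psi>01 by auto
    then show ?thesis by (metis bounded_closed_interval bounded_subset)
  qed
  have \<psi>m: "\<psi> R \<in> borel_measurable borel" for R by (rule borel_measurable_continuous_onI[OF \<psi>c])
  have \<psi>supp: "\<psi> R y \<le> indicator (cball 0 R) y" for R y
    using \<psi>01[of R y] unfolding \<psi>_def by (auto simp: indicator_def)
  have lim\<psi>: "(\<lambda>R. \<integral>y. \<psi> R y \<partial>\<mu>) \<longlonglongrightarrow> 1"
  proof -
    have "(\<lambda>R. \<integral>y. \<psi> R y \<partial>\<mu>) \<longlonglongrightarrow> (\<integral>y. 1 \<partial>\<mu>)"
    proof (rule integral_dominated_convergence[where w="\<lambda>_. 1"])
      show "(\<lambda>y. 1::real) \<in> borel_measurable \<mu>" by simp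
      show "\<psi> R \<in> borel_measurable \<mu>" for R by (rule meas_borel[OF mu(2) \<psi>m])
      show "integrable \<mu> (\<lambda>_. 1::real)" by simp
      show "AE y in \<mu>. norm (\<psi> R y) \<le> 1" for R using \<psi>01 by (intro AE_I2) auto
      show "AE y in \<mu>. (\<lambda>R. \<psi> R y) \<longlonglongrightarrow> 1"
      proof (intro AE_I2)
        fix y :: 'a
        obtain K :: nat where K: "norm y + 1 < real K" using reals_Archimedean2 by blast
        have "\<forall>\<^sub>F R in sequentially. \<psi> R y = 1"
          unfolding eventually_sequentially
        proof (intro exI allI impI)
          fix R assume "K \<le> R"
          then have "norm y + 1 < real R" using K by linarith
          then show "\<psi> R y = 1" unfolding \<psi>_def by simp
        qed
        then show "(\<lambda>R. \<psi> R y) \<longlonglongrightarrow> 1" by (simp add: tendsto_eventually)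
      qed
    qed
    then show ?thesis using mu.prob_space spmu by simp
  qed
  have eq\<psi>: "(\<integral>y. g y * \<psi> R y \<partial>lborel) = (\<integral>y. \<psi> R y \<partial>\<mu>)" for R
  proof -
    have "(\<lambda>n. \<integral>y. f n y * \<psi> R y \<partial>lborel) \<longlonglongrightarrow> (\<integral>y. g y * \<psi> R y \<partial>lborel)"
    proof (rule integral_dominated_convergence[where w="\<lambda>y. C * indicator (cball 0 R) y"])
      show "(\<lambda>y. g y * \<psi> R y) \<in> borel_measurable lborel" using gm \<psi>m by simp
      show "(\<lambda>y. f n y * \<psi> R y) \<in> borel_measurable lborel" for n using fm \<psi>m by simp
      show "integrable lborel (\<lambda>y. C * indicator (cball 0 (real R)) y)" by (rule cball_integrable)
      show "AE y in lborel. (\<lambda>n. f n y * \<psi> R y) \<longlonglongrightarrow> g y * \<psi> R y"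
        using gl by (intro AE_I2 tendsto_mult) auto
      show "AE y in lborel. norm (f n y * \<psi> R y) \<le> C * indicator (cball 0 (real R)) y" for n
      proof (intro AE_I2)
        fix y
        have "norm (f n y * \<psi> R y) = f n y * \<psi> R y" using fnn \<psi>01 by simp
        also have "\<dots> \<le> C * indicator (cball 0 (real R)) y"
          using fnn fC \<psi>01 \<psi>supp C0 by (intro mult_mono) auto
        finally show "norm (f n y * \<psi> R y) \<le> C * indicator (cball 0 (real R)) y" .
      qed
    qed
    moreover have "(\<lambda>n. \<integral>y. f n y * \<psi> R y \<partial>lborel) \<longlonglongrightarrow> (\<integral>y. \<psi> R y \<partial>\<mu>)"
      by (rule weak[OF \<psi>c \<psi>b])
    ultimately show ?thesis by (rule LIMSEQ_unique)
  qed
  have gge1: "1 \<le> (\<integral>x. g x \<partial>lborel)"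
  proof (rule LIMSEQ_le_const2[OF lim\<psi>], intro exI allI impI)
    fix R :: nat
    have "(\<integral>y. \<psi> R y \<partial>\<mu>) = (\<integral>y. g y * \<psi> R y \<partial>lborel)" by (rule eq\<psi>[symmetric])
    also have "\<dots> \<le> (\<integral>y. g y \<partial>lborel)"
    proof (rule integral_mono[OF _ gint])
      show "integrable lborel (\<lambda>y. g y * \<psi> R y)"
        by (rule Bochner_Integration.integrable_bound[OF gint]) (use gm \<psi>m gnn \<psi>01 in \<open>auto intro!: AE_I2 simp: abs_mult mult_left_le\<close>)
      fix y show "g y * \<psi> R y \<le> g y" using gnn \<psi>01 by (simp add: mult_left_le)
    qed
    finally show "(\<integral>y. \<psi> R y \<partial>\<mu>) \<le> (\<integral>y. g y \<partial>lborel)" .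
  qed
  have g1: "(\<integral>x. g x \<partial>lborel) = 1" using gle1 gge1 by simp
  have gone: "(\<integral>\<^sup>+x. ennreal (g x) \<partial>lborel) = 1" using gI g1 by simp
  define L where "L n = (\<integral>x. \<bar>f n x - g x\<bar> \<partial>lborel)" for n
  have Li: "integrable lborel (\<lambda>x. \<bar>f n x - g x\<bar>)" for n
    using Bochner_Integration.integrable_diff[OF fint gint] by (simp add: integrable_abs)
  have Lim: "L \<longlonglongrightarrow> 0"
  proof -
    have "(\<lambda>n. \<integral>\<^sup>+x. norm (f n x - g x) \<partial>lborel) \<longlonglongrightarrow> 0"
    proof (rule Scheffe_lemma2)
      show "f n \<in> borel_measurable lborel" for n using fm by simp
      show "integrable lborel g" by (rule gint)
      show "AE x in lborel. (\<lambda>n. f n x) \<longlonglongrightarrow> g x" using gl by simp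
      show "(\<integral>\<^sup>+x. ennreal (norm (f n x)) \<partial>lborel) \<le> (\<integral>\<^sup>+x. ennreal (norm (g x)) \<partial>lborel)" for n
        using fone gone fnn gnn by simp
    qed
    moreover have "(\<integral>\<^sup>+x. norm (f n x - g x) \<partial>lborel) = ennreal (L n)" for n
      unfolding L_def using Li by (subst nn_integral_eq_integral) auto
    ultimately have "(\<lambda>n. ennreal (L n)) \<longlonglongrightarrow> ennreal 0" by simp
    moreover have "0 \<le> L n" for n unfolding L_def by simp
    ultimately show ?thesis by (subst (asm) tendsto_ennreal_iff) auto
  qed
  define \<nu> where "\<nu> = density lborel (\<lambda>x. ennreal (g x))"
  have s\<nu>: "sets \<nu> = sets borel" unfolding \<nu>_def by simp
  have sp\<nu>: "space \<nu> = UNIV" unfolding \<nu>_def by simp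
  have e\<nu>: "emeasure \<nu> (space \<nu>) = 1"
    unfolding sp\<nu> unfolding \<nu>_def using gm gone by (subst emeasure_density) auto
  have fin\<nu>: "finite_measure \<nu>" using e\<nu> by (intro finite_measureI) simp
  have intsame: "(\<integral>x. \<phi> x \<partial>\<mu>) = (\<integral>x. \<phi> x \<partial>\<nu>)"
    if \<phi>c: "continuous_on UNIV \<phi>" and \<phi>b: "bounded (range \<phi>)" for \<phi> :: "'a \<Rightarrow> real"
  proof -
    obtain B where B: "\<And>y. \<bar>\<phi> y\<bar> \<le> B" using \<phi>b unfolding bounded_iff by auto
    have \<phi>m: "\<phi> \<in> borel_measurable borel" by (rule borel_measurable_continuous_onI[OF \<phi>c])
    have i\<nu>: "(\<integral>x. \<phi> x \<partial>\<nu>) = (\<integral>y. g y * \<phi> y \<partial>lborel)"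
      unfolding \<nu>_def by (rule int_dens[OF gm gnn \<phi>m])
    have fi: "integrable lborel (\<lambda>y. f n y * \<phi> y)" for n
      by (rule Bochner_Integration.integrable_bound[OF integrable_mult_left[OF fint[of n], of B]])
         (use fm \<phi>m B fnn in \<open>auto intro!: AE_I2 mult_left_mono order_trans[OF _ abs_ge_self] simp: abs_mult\<close>)
    have gi: "integrable lborel (\<lambda>y. g y * \<phi> y)"
      by (rule Bochner_Integration.integrable_bound[OF integrable_mult_left[OF gint, of B]])
         (use gm \<phi>m B gnn in \<open>auto intro!: AE_I2 mult_left_mono order_trans[OF _ abs_ge_self] simp: abs_mult\<close>)
    have "(\<lambda>n. \<integral>y. f n y * \<phi> y \<partial>lborel) \<longlonglongrightarrow> (\<integral>y. g y * \<phi> y \<partial>lborel)"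
    proof -
      have bnd: "\<bar>(\<integral>y. f n y * \<phi> y \<partial>lborel) - (\<integral>y. g y * \<phi> y \<partial>lborel)\<bar> \<le> B * L n" for n
      proof -
        have "(\<integral>y. f n y * \<phi> y \<partial>lborel) - (\<integral>y. g y * \<phi> y \<partial>lborel) = (\<integral>y. (f n y - g y) * \<phi> y \<partial>lborel)"
          using Bochner_Integration.integral_diff[OF fi gi] by (simp add: left_diff_distrib)
        also have "\<bar>\<dots>\<bar> \<le> (\<integral>y. norm ((f n y - g y) * \<phi> y) \<partial>lborel)"
          using integral_norm_bound[of lborel "\<lambda>y. (f n y - g y) * \<phi> y"] by simp
        also have "\<dots> \<le> (\<integral>y. B * \<bar>f n y - g y\<bar> \<partial>lborel)"
        proof (rule integral_mono)
          show "integrable lborel (\<lambda>y. norm ((f n y - g y) * \<phi> y))"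
            using Bochner_Integration.integrable_diff[OF fi gi] by (simp add: left_diff_distrib)
          show "integrable lborel (\<lambda>y. B * \<bar>f n y - g y\<bar>)" using Li by simp
          fix y show "norm ((f n y - g y) * \<phi> y) \<le> B * \<bar>f n y - g y\<bar>"
            using mult_right_mono[OF B[of y] abs_ge_zero[of "f n y - g y"]] by (simp add: abs_mult mult.commute)
        qed
        also have "\<dots> = B * L n" unfolding L_def by simp
        finally show ?thesis .
      qed
      have BL: "(\<lambda>n. B * L n) \<longlonglongrightarrow> 0" using tendsto_mult_right_zero[OF Lim] by simp
      have "(\<lambda>n. (\<integral>y. f n y * \<phi> y \<partial>lborel) - (\<integral>y. g y * \<phi> y \<partial>lborel)) \<longlonglongrightarrow> 0"
      proof (rule Lim_null_comparison[OF _ BL])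
        show "\<forall>\<^sub>F n in sequentially. norm ((\<integral>y. f n y * \<phi> y \<partial>lborel) - (\<integral>y. g y * \<phi> y \<partial>lborel)) \<le> B * L n"
          by (intro always_eventually allI) (simp only: real_norm_def bnd)
      qed
      then show ?thesis by (rule LIM_zero_cancel)
    qed
    then have "(\<integral>y. \<phi> y \<partial>\<mu>) = (\<integral>y. g y * \<phi> y \<partial>lborel)"
      by (rule LIMSEQ_unique[OF weak[OF \<phi>c \<phi>b]])
    then show ?thesis using i\<nu> by simp
  qed
  have mueq: "measure \<mu> B = measure \<nu> B" if "B \<in> sets borel" for B
  proof -
    have fin\<mu>: "finite_measure \<mu>" by (rule finite_measureI) simp
    have "emeasure \<mu> B = emeasure \<nu> B" by (rule meas_eq[OF fin\<mu> mu(2) fin\<nu> s\<nu> intsame that])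
    then show ?thesis unfolding measure_def by (rule arg_cong)
  qed
  have mdens: "measure (density lborel (\<lambda>x. ennreal (h x))) B = (\<integral>y. h y * indicator B y \<partial>lborel)"
    if "h \<in> borel_measurable borel" "\<And>x. 0 \<le> h x" "B \<in> sets borel" for h :: "'a \<Rightarrow> real" and B
  proof -
    have "measure (density lborel (\<lambda>x. ennreal (h x))) B = integral\<^sup>L (density lborel (\<lambda>x. ennreal (h x))) (indicator B)"
      by simp
    also have "\<dots> = (\<integral>y. h y * indicator B y \<partial>lborel)"
      by (rule int_dens[OF that(1,2)]) (use that(3) in simp)
    finally show ?thesis .
  qed
  have bd: "tv_dist (density lborel (\<lambda>x. ennreal (f n x))) \<mu> \<le> 2 * L n" for n
  proof (rule tv_le)
    fix B assume "B \<in> sets (density lborel (\<lambda>x. ennreal (f n x)))"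
    then have B: "B \<in> sets borel" by simp
    have i1: "integrable lborel (\<lambda>y. f n y * indicator B y)"
      by (rule Bochner_Integration.integrable_bound[OF fint[of n]]) (use fm B fnn in \<open>auto intro!: AE_I2 simp: indicator_def\<close>)
    have i2: "integrable lborel (\<lambda>y. g y * indicator B y)"
      by (rule Bochner_Integration.integrable_bound[OF gint]) (use gm B gnn in \<open>auto intro!: AE_I2 simp: indicator_def\<close>)
    have "measure (density lborel (\<lambda>x. ennreal (f n x))) B - measure \<mu> B
        = (\<integral>y. f n y * indicator B y \<partial>lborel) - (\<integral>y. g y * indicator B y \<partial>lborel)"
      using mdens[OF fm fnn B] mdens[OF gm gnn B] mueq[OF B] unfolding \<nu>_def by simp
    also have "\<dots> = (\<integral>y. (f n y - g y) * indicator B y \<partial>lborel)"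
      using Bochner_Integration.integral_diff[OF i1 i2] by (simp add: left_diff_distrib)
    finally have eq: "measure (density lborel (\<lambda>x. ennreal (f n x))) B - measure \<mu> B = (\<integral>y. (f n y - g y) * indicator B y \<partial>lborel)" .
    have "\<bar>\<integral>y. (f n y - g y) * indicator B y \<partial>lborel\<bar> \<le> (\<integral>y. norm ((f n y - g y) * indicator B y) \<partial>lborel)"
      using integral_norm_bound[of lborel "\<lambda>y. (f n y - g y) * indicator B y"] by simp
    also have "\<dots> \<le> L n" unfolding L_def
    proof (rule integral_mono[OF _ Li])
      show "integrable lborel (\<lambda>y. norm ((f n y - g y) * indicator B y))"
        using Bochner_Integration.integrable_diff[OF i1 i2] by (simp add: left_diff_distrib)
      fix y show "norm ((f n y - g y) * indicator B y) \<le> \<bar>f n y - g y\<bar>"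
        by (simp add: indicator_def)
    qed
    finally show "\<bar>measure (density lborel (\<lambda>x. ennreal (f n x))) B - measure \<mu> B\<bar> \<le> L n"
      using eq by simp
  qed
  show ?thesis
  proof (rule tendsto_sandwich[where f="\<lambda>_. 0" and h="\<lambda>n. 2 * L n"])
    show "\<forall>\<^sub>F n in sequentially. 0 \<le> tv_dist (density lborel (\<lambda>x. ennreal (f n x))) \<mu>"
      using tv_nonneg[OF fp mu(1)] by simp
    show "\<forall>\<^sub>F n in sequentially. tv_dist (density lborel (\<lambda>x. ennreal (f n x))) \<mu> \<le> 2 * L n"
      using bd by simp
    show "(\<lambda>n. 2 * L n) \<longlonglongrightarrow> 0" using tendsto_mult_right_zero[OF Lim] by simp
  qed simp
qed

theorem lemma2:
  fixes M :: nat
  shows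
  "(\<forall>(f :: nat \<Rightarrow> 'a::euclidean_space \<Rightarrow> real) \<mu>.
      (\<forall>n. f n \<in> borel_measurable borel \<and> (\<forall>x. 0 \<le> f n x) \<and>
           prob_space (density lborel (\<lambda>x. ennreal (f n x)))) \<and>
      (\<exists>C. \<forall>n x. f n x \<le> C) \<and>
      (\<forall>e>0. \<exists>\<delta>>0. \<forall>n x y. dist x y < \<delta> \<longrightarrow> \<bar>f n x - f n y\<bar> < e) \<and>
      prob_borel \<mu> \<and>
      weak_conv_gen (\<lambda>n. density lborel (\<lambda>x. ennreal (f n x))) \<mu>
      \<longrightarrow> (\<lambda>n. tv_dist (density lborel (\<lambda>x. ennreal (f n x))) \<mu>) \<longlonglongrightarrow> 0)
   \<and>
   (\<forall>(Qs :: nat \<Rightarrow> 'a \<Rightarrow> nat) Q P.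
      (\<forall>n. Qs n \<in> convex_quantizers M) \<and> Q \<in> convex_quantizers M \<and>
      prob_borel P \<and> has_density P \<and>
      weak_conv_gen (\<lambda>n. joint P (Qs n)) (joint P Q)
      \<longrightarrow> ((\<lambda>n. tv_dist (joint P (Qs n)) (joint P Q)) \<longlonglongrightarrow> 0) \<and>
          (has_pos_density P \<longrightarrow>
             (\<forall>P'. prob_borel P' \<and> has_density P' \<longrightarrow>
                (\<lambda>n. tv_dist (joint P' (Qs n)) (joint P' Q)) \<longlonglongrightarrow> 0)))
   \<and>
   (\<forall>(Qs :: nat \<Rightarrow> 'a \<Rightarrow> nat) Q P Ps' P'.
      (\<forall>n. Qs n \<in> convex_quantizers M) \<and> Q \<in> convex_quantizers M \<and>
      prob_borel P \<and> has_pos_density P \<and>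
      weak_conv_gen (\<lambda>n. joint P (Qs n)) (joint P Q) \<and>
      (\<forall>n. prob_borel (Ps' n)) \<and> prob_borel P' \<and> has_density P' \<and>
      (\<lambda>n. tv_dist (Ps' n) P') \<longlonglongrightarrow> 0
      \<longrightarrow> (\<lambda>n. tv_dist (joint (Ps' n) (Qs n)) (joint P' Q)) \<longlonglongrightarrow> 0)"
  proof (intro conjI)
  show "\<forall>(f :: nat \<Rightarrow> 'a::euclidean_space \<Rightarrow> real) \<mu>.
      (\<forall>n. f n \<in> borel_measurable borel \<and> (\<forall>x. 0 \<le> f n x) \<and>
           prob_space (density lborel (\<lambda>x. ennreal (f n x)))) \<and>
      (\<exists>C. \<forall>n x. f n x \<le> C) \<and>
      (\<forall>e>0. \<exists>\<delta>>0. \<forall>n x y. dist x y < \<delta> \<longrightarrow> \<bar>f n x - f n y\<bar> < e) \<and>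
      prob_borel \<mu> \<and>
      weak_conv_gen (\<lambda>n. density lborel (\<lambda>x. ennreal (f n x))) \<mu>
      \<longrightarrow> (\<lambda>n. tv_dist (density lborel (\<lambda>x. ennreal (f n x))) \<mu>) \<longlonglongrightarrow> 0"
    apply (intro allI impI)
    apply (elim conjE)
    apply (rule part_a)
        apply assumption+
    done
next
  show "\<forall>(Qs :: nat \<Rightarrow> 'a \<Rightarrow> nat) Q P.
      (\<forall>n. Qs n \<in> convex_quantizers M) \<and> Q \<in> convex_quantizers M \<and>
      prob_borel P \<and> has_density P \<and>
      weak_conv_gen (\<lambda>n. joint P (Qs n)) (joint P Q)
      \<longrightarrow> ((\<lambda>n. tv_dist (joint P (Qs n)) (joint P Q)) \<longlonglongrightarrow> 0) \<and>
          (has_pos_density P \<longrightarrow>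
             (\<forall>P'. prob_borel P' \<and> has_density P' \<longrightarrow>
                (\<lambda>n. tv_dist (joint P' (Qs n)) (joint P' Q)) \<longlonglongrightarrow> 0))"
    apply (intro allI impI)
    apply (elim conjE)
    apply (rule part_b)
        apply assumption+
    done
next
  show "\<forall>(Qs :: nat \<Rightarrow> 'a \<Rightarrow> nat) Q P Ps' P'.
      (\<forall>n. Qs n \<in> convex_quantizers M) \<and> Q \<in> convex_quantizers M \<and>
      prob_borel P \<and> has_pos_density P \<and>
      weak_conv_gen (\<lambda>n. joint P (Qs n)) (joint P Q) \<and>
      (\<forall>n. prob_borel (Ps' n)) \<and> prob_borel P' \<and> has_density P' \<and>
      (\<lambda>n. tv_dist (Ps' n) P') \<longlonglongrightarrow> 0
      \<longrightarrow> (\<lambda>n. tv_dist (joint (Ps' n) (Qs n)) (joint P' Q)) \<longlonglongrightarrow> 0"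
    apply (intro allI impI)
    apply (elim conjE)
    apply (rule part_c)
        apply assumption+
    done
qed

end
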